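(* Let $(s_n)$ be a sequence of nonnegative reals and $D\in\mathbb{N}\setminus\{0\}$ with $s_n\leq D$ for all $n$. Let $(\alpha_n)\subset\,]0,1[$, $(r_n),(v_n)\subset\mathbb{R}$, $(\gamma_n)\subset[0,\infty)$, and let ${\rm A'}:\mathbb{N}\times\mathbb{N}\to\mathbb{N}$ be monotone in both variables with $\prod_{i=m}^{{\rm A'}(m,k)}(1-\alpha_i)\leq\frac{1}{k+1}$ for all $k,m\in\mathbb{N}$. Let $k,n,p\in\mathbb{N}$ and assume (i) $\forall m\in[n,p]\ \big(v_m\leq\frac{1}{4(k+1)(p+1)}\ \wedge\ r_m\leq\frac{1}{4(k+1)}\big)$; (ii) $\forall m\in\mathbb{N}\ \big(\sum_{i=n}^{n+m}\gamma_i\leq\frac{1}{4(k+1)}\big)$; (iii) $\forall m\in\mathbb{N}\ \big(s_{m+1}\leq(1-\alpha_m)(s_m+v_m)+\alpha_m r_m+\gamma_m\big)$. Then $s_m\leq\frac{1}{k+1}$ for all $m\in[\sigma_2(k,n),p]$, where $\sigma_2(k,n):={\rm A'}\big(n,4D(k+1)-1\big)+1$.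
   Context: ${\rm A'}$ monotone in both variables means: $k\leq k'$ and $m\leq m'$ imply ${\rm A'}(m,k)\leq{\rm A'}(m',k')$. $[a,b]$ denotes the set of natural numbers $m$ with $a\leq m\leq b$. *)

theory Defs
  imports Complex_Main
begin

definition sigma2 :: "(nat \<Rightarrow> nat \<Rightarrow> nat) \<Rightarrow> nat \<Rightarrow> nat \<Rightarrow> nat \<Rightarrow> nat" where
  "sigma2 A' D k n = A' n (4 * D * (k + 1) - 1) + 1"

end

theory Submission
  imports Defs
begin

theorem mainTheorem6:
  fixes s v r gamma alpha :: "nat \<Rightarrow> real"
    and D :: nat and A' :: "nat \<Rightarrow> nat \<Rightarrow> nat" and k n p :: nat
  assumes s_nonneg: "\<And>m. s m \<ge> 0"
    and D_pos: "D \<noteq> 0"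
    and s_le_D: "\<And>m. s m \<le> real D"
    and alpha_range: "\<And>m. 0 < alpha m \<and> alpha m < 1"
    and gamma_nonneg: "\<And>m. gamma m \<ge> 0"
    and A'_mono: "\<And>m m' k k'. m \<le> m' \<Longrightarrow> k \<le> k' \<Longrightarrow> A' m k \<le> A' m' k'"
    and A'_rate: "\<And>k m. (\<Prod>i\<in>{m..A' m k}. (1 - alpha i)) \<le> 1 / (real k + 1)"
    and i: "\<And>m. n \<le> m \<Longrightarrow> m \<le> p \<Longrightarrow>
              v m \<le> 1 / (4 * (real k + 1) * (real p + 1)) \<and> r m \<le> 1 / (4 * (real k + 1))"
    and ii: "\<And>m. (\<Sum>i\<in>{n..n+m}. gamma i) \<le> 1 / (4 * (real k + 1))"
    and iii: "\<And>m. s (m + 1) \<le> (1 - alpha m) * (s m + v m) + alpha m * r m + gamma m"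
  shows "\<forall>m. sigma2 A' D k n \<le> m \<and> m \<le> p \<longrightarrow> s m \<le> 1 / (real k + 1)"
proof (intro allI impI)
  fix m assume hm: "sigma2 A' D k n \<le> m \<and> m \<le> p"
  define c where "c = 1 / (4 * (real k + 1))"
  define c' where "c' = 1 / (4 * (real k + 1) * (real p + 1))"
  define P where "P j = (\<Prod>i\<in>{n..<j}. (1 - alpha i))" for j
  define G where "G j = (\<Sum>i\<in>{n..<j}. gamma i)" for j
  have cpos: "c > 0" "c' > 0" unfolding c_def c'_def by auto
  have Pnn: "P j \<ge> 0" "P j \<le> 1" for j unfolding P_def using alpha_range
    by (auto intro!: prod_nonneg prod_le_1 simp: less_imp_le)
  have Gnn: "G j \<ge> 0" for j unfolding G_def using gamma_nonneg by (auto intro: sum_nonneg)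
  have inv: "n + d \<le> p \<longrightarrow> s (n+d) \<le> P (n+d) * s n + (1 - P (n+d)) * c + real d * c' + G (n+d)" for d
  proof (induction d)
    case 0 then show ?case by (simp add: P_def G_def)
  next
    case (Suc d)
    show ?case
    proof
      assume h: "n + Suc d \<le> p"
      let ?j = "n + d"
      have IH: "s ?j \<le> P ?j * s n + (1 - P ?j) * c + real d * c' + G ?j" using Suc h by auto
      have vr: "v ?j \<le> c'" "r ?j \<le> c" using i[of ?j] h unfolding c_def c'_def by auto
      have a: "0 < alpha ?j" "alpha ?j < 1" using alpha_range by auto
      have PS: "P (Suc ?j) = P ?j * (1 - alpha ?j)" unfolding P_def by (simp add: prod.atLeastLessThan_Suc)
      have GS: "G (Suc ?j) = G ?j + gamma ?j" unfolding G_def by (simp add: sum.atLeastLessThan_Suc)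
      have "s (?j + 1) \<le> (1 - alpha ?j) * (s ?j + v ?j) + alpha ?j * r ?j + gamma ?j" by (rule iii)
      also have "\<dots> \<le> (1 - alpha ?j) * (P ?j * s n + (1 - P ?j) * c + real d * c' + G ?j + c') + alpha ?j * c + gamma ?j"
        using IH vr a by (intro add_mono mult_left_mono) auto
      also have "\<dots> \<le> (1 - alpha ?j) * (P ?j * s n + (1 - P ?j) * c) + (real d * c' + G ?j + c') + alpha ?j * c + gamma ?j"
      proof -
        have "0 \<le> real d * c' + G ?j + c'" using cpos Gnn[of ?j] by auto
        then have "(1 - alpha ?j) * (real d * c' + G ?j + c') \<le> real d * c' + G ?j + c'"
          using a by (simp add: mult_le_cancel_right1 mult_left_le_one_le)
        then show ?thesis by (simp add: algebra_simps)
      qed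
      also have "\<dots> = P (Suc ?j) * s n + (1 - P (Suc ?j)) * c + real (Suc d) * c' + G (Suc ?j)"
        unfolding PS GS by (simp add: algebra_simps)
      finally show "s (n + Suc d) \<le> P (n + Suc d) * s n + (1 - P (n + Suc d)) * c + real (Suc d) * c' + G (n + Suc d)"
        by simp
    qed
  qed
  define K where "K = 4 * D * (k + 1) - 1"
  define N where "N = A' n K"
  have K1: "real K + 1 = 4 * real D * (real k + 1)"
    using D_pos unfolding K_def by (cases D) (auto simp: of_nat_diff algebra_simps)
  have rateN: "(\<Prod>i\<in>{n..N}. (1 - alpha i)) \<le> 1 / (4 * real D * (real k + 1))"
    using A'_rate[where k=K and m=n] K1 unfolding N_def by simp
  have Nn: "n \<le> N"
  proof (rule ccontr)
    assume "\<not> n \<le> N"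
    then have "{n..N} = {}" by auto
    with rateN have "1 \<le> 1 / (4 * real D * (real k + 1))" by simp
    moreover have "4 * real D * (real k + 1) \<ge> 4" 
    proof -
      have "real D \<ge> 1" "real k + 1 \<ge> 1" using D_pos by auto
      then have "real D * (real k + 1) \<ge> 1" by (metis mult_mono' mult_1_left zero_le_one)
      then show ?thesis by simp
    qed
    ultimately show False by (simp add: field_simps)
  qed
  have mN: "N + 1 \<le> m" using hm unfolding sigma2_def N_def K_def by simp
  have Pm: "P m \<le> 1 / (4 * real D * (real k + 1))"
  proof -
    have split: "{n..<m} = {n..N} \<union> {Suc N..<m}" using Nn mN by auto
    have "P m = (\<Prod>i\<in>{n..N}. (1 - alpha i)) * (\<Prod>i\<in>{Suc N..<m}. (1 - alpha i))"
      unfolding P_def split by (rule prod.union_disjoint) auto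
    also have "\<dots> \<le> (\<Prod>i\<in>{n..N}. (1 - alpha i)) * 1"
      using alpha_range by (intro mult_left_mono prod_le_1 prod_nonneg) (auto simp: less_imp_le)
    finally show ?thesis using rateN by simp
  qed
  obtain d where md: "m = n + d" using Nn mN by (metis add_leD1 le_trans le_Suc_ex)
  have sm: "s m \<le> P m * s n + (1 - P m) * c + real d * c' + G m" using inv[of d] hm md by simp
  have t1: "P m * s n \<le> c"
  proof -
    have "P m * s n \<le> P m * real D" using s_le_D Pnn by (intro mult_left_mono) auto
    also have "\<dots> \<le> 1 / (4 * real D * (real k + 1)) * real D" using Pm by (intro mult_right_mono) auto
    also have "\<dots> = c"
    proof -
      have "real D > 0" using D_pos by simp
      then have "4 * real D * (real k + 1) > 0" by simp
      then show ?thesis unfolding c_def using \<open>real D > 0\<close> by (simp add: divide_simps)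
    qed
    finally show ?thesis .
  qed
  have t2: "(1 - P m) * c \<le> c" using Pnn cpos by (simp add: mult_le_cancel_right1)
  have t3: "real d * c' \<le> c"
  proof -
    have "real d \<le> real p + 1" using hm md by simp
    then have "real d * c' \<le> (real p + 1) * c'" using cpos by (intro mult_right_mono) auto
    also have "\<dots> = c" unfolding c_def c'_def by (simp add: divide_simps)
    finally show ?thesis .
  qed
  have t4: "G m \<le> c"
  proof -
    have "{n..<m} = {n..n + (m - 1 - n)}" using Nn mN by auto
    then show ?thesis unfolding G_def c_def using ii by simp
  qed
  have "s m \<le> 4 * c" using sm t1 t2 t3 t4 by linarith
  moreover have "4 * c = 1 / (real k + 1)" unfolding c_def by (simp add: divide_simps)
  ultimately show "s m \<le> 1 / (real k + 1)" by simp
qed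

end
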